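(* Let $R$ be a commutative Noetherian domain which is an algebra over an uncountable field but is not itself a field. Suppose there is a countable multiplicatively closed subset $\mathcal A\subseteq R\setminus\{0\}$ such that $R\mathcal A^{-1}$ is the quotient field of $R$. Then $R$ has Krull dimension $1$ and $\mathrm{Spec}(R)$ is countable. *)

theory Defs
  imports Main "HOL-Library.Extended_Nat" "HOL-Library.Countable_Set"
    "HOL-Computational_Algebra.Fraction_Field"
begin

definition is_ideal :: "'a::comm_ring_1 set \<Rightarrow> bool" where
  "is_ideal I \<longleftrightarrow> 0 \<in> I \<and> (\<forall>x\<in>I. \<forall>y\<in>I. x + y \<in> I) \<and> (\<forall>r. \<forall>x\<in>I. r * x \<in> I)"

definition is_prime_ideal :: "'a::comm_ring_1 set \<Rightarrow> bool" where
  "is_prime_ideal P \<longleftrightarrow> is_ideal P \<and> P \<noteq> UNIV \<and> (\<forall>x y. x * y \<in> P \<longrightarrow> x \<in> P \<or> y \<in> P)"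

definition gen_ideal :: "'a::comm_ring_1 set \<Rightarrow> 'a set" where
  "gen_ideal F = {x. \<exists>c. x = (\<Sum>f\<in>F. c f * f)}"

definition noetherian :: "'a::comm_ring_1 itself \<Rightarrow> bool" where
  "noetherian _ \<longleftrightarrow> (\<forall>I::'a set. is_ideal I \<longrightarrow> (\<exists>F. finite F \<and> I = gen_ideal F))"

definition krull_dim :: "'a::comm_ring_1 itself \<Rightarrow> enat" where
  "krull_dim _ = Sup {enat n | n. \<exists>P :: nat \<Rightarrow> 'a set.
      (\<forall>i\<le>n. is_prime_ideal (P i)) \<and> (\<forall>i<n. P i \<subset> P (Suc i))}"

text \<open>Unital ring homomorphism (structure map making R a k-algebra).\<close>
definition is_ring_hom :: "('k::comm_ring_1 \<Rightarrow> 'a::comm_ring_1) \<Rightarrow> bool" where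
  "is_ring_hom \<phi> \<longleftrightarrow> \<phi> 1 = 1 \<and> (\<forall>x y. \<phi> (x + y) = \<phi> x + \<phi> y) \<and> (\<forall>x y. \<phi> (x * y) = \<phi> x * \<phi> y)"

end

theory Submission
  imports Defs "HOL-Computational_Algebra.Polynomial"
begin

lemma ideal_0: "is_ideal I \<Longrightarrow> 0 \<in> I" by (simp add: is_ideal_def)
lemma ideal_add: "is_ideal I \<Longrightarrow> x \<in> I \<Longrightarrow> y \<in> I \<Longrightarrow> x + y \<in> I" by (simp add: is_ideal_def)
lemma ideal_lmult: "is_ideal I \<Longrightarrow> x \<in> I \<Longrightarrow> r * x \<in> I" by (simp add: is_ideal_def)
lemma ideal_rmult: "is_ideal I \<Longrightarrow> x \<in> I \<Longrightarrow> x * r \<in> I"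
  by (metis ideal_lmult mult.commute)
lemma ideal_neg: "is_ideal I \<Longrightarrow> x \<in> I \<Longrightarrow> - x \<in> I"
  using ideal_lmult[of I x "-1"] by simp
lemma ideal_diff: "is_ideal I \<Longrightarrow> x \<in> I \<Longrightarrow> y \<in> I \<Longrightarrow> x - y \<in> I"
  using ideal_add ideal_neg by (metis diff_conv_add_uminus)
lemma ideal_sum: "is_ideal I \<Longrightarrow> (\<And>x. x \<in> S \<Longrightarrow> g x \<in> I) \<Longrightarrow> sum g S \<in> I"
proof (induction S rule: infinite_finite_induct)
  case (infinite A) then show ?case by (simp add: ideal_0)
next
  case empty then show ?case by (simp add: ideal_0)
next
  case (insert x F) then show ?case by (simp add: ideal_add)
qed

lemma prime_ideal: "is_prime_ideal P \<Longrightarrow> is_ideal P" by (simp add: is_prime_ideal_def)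
lemma prime_mult: "is_prime_ideal P \<Longrightarrow> x * y \<in> P \<Longrightarrow> x \<in> P \<or> y \<in> P" by (simp add: is_prime_ideal_def)
lemma prime_one: "is_prime_ideal (P::'a::comm_ring_1 set) \<Longrightarrow> 1 \<notin> P"
  unfolding is_prime_ideal_def is_ideal_def by (metis UNIV_eq_I mult.right_neutral)
lemma prime_notin_mult: "is_prime_ideal P \<Longrightarrow> x \<notin> P \<Longrightarrow> y \<notin> P \<Longrightarrow> x * y \<notin> P"
  using prime_mult by blast
lemma prime_prod_notin: "is_prime_ideal P \<Longrightarrow> (\<And>i. i \<in> S \<Longrightarrow> f i \<notin> P) \<Longrightarrow> prod f S \<notin> P"
proof (induction S rule: infinite_finite_induct)
  case (infinite A) then show ?case by (simp add: prime_one)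
next
  case empty then show ?case by (simp add: prime_one)
next
  case (insert x F) then show ?case by (simp add: prime_notin_mult)
qed
lemma prime_pow: "is_prime_ideal P \<Longrightarrow> x ^ n \<in> P \<Longrightarrow> x \<in> P"
  by (induction n) (auto simp: prime_one dest: prime_mult)

lemma gen_ideal_sub: "is_ideal I \<Longrightarrow> F \<subseteq> I \<Longrightarrow> gen_ideal F \<subseteq> I"
  unfolding gen_ideal_def by (auto intro!: ideal_sum ideal_lmult)

lemma gen_ideal_sup: "finite F \<Longrightarrow> F \<subseteq> gen_ideal F"
proof
  fix x assume "finite F" "x \<in> F"
  have "(\<Sum>f\<in>F. (if f = x then 1 else 0) * f) = (\<Sum>f\<in>F. if f = x then f else 0)"
    by (rule sum.cong) auto
  then have "x = (\<Sum>f\<in>F. (if f = x then 1 else 0) * f)"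
    using \<open>finite F\<close> \<open>x \<in> F\<close> by (simp add: sum.delta')
  then show "x \<in> gen_ideal F" unfolding gen_ideal_def mem_Collect_eq by (rule exI[where x="\<lambda>f. if f = x then 1 else 0"])
qed

lemma noeth_max:
  fixes S :: "'a::comm_ring_1 set set"
  assumes N: "noetherian TYPE('a)" and ne: "S \<noteq> {}" and id: "\<forall>I\<in>S. is_ideal I"
  shows "\<exists>I\<in>S. \<forall>J\<in>S. I \<subseteq> J \<longrightarrow> J = I"
proof (rule ccontr)
  assume "\<not> ?thesis"
  then have "\<forall>I\<in>S. \<exists>J\<in>S. I \<subset> J" by blast
  then obtain f where f: "\<And>I. I \<in> S \<Longrightarrow> f I \<in> S \<and> I \<subset> f I" by metis
  from ne obtain I0 where I0: "I0 \<in> S" by blast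
  define C where "C n = (f ^^ n) I0" for n
  have CS: "C n \<in> S" for n
  proof (induction n)
    case 0 then show ?case by (simp add: C_def I0)
  next
    case (Suc n) then show ?case using f[of "C n"] by (simp add: C_def)
  qed
  have Csuc: "C n \<subset> C (Suc n)" for n using f[OF CS[of n]] by (simp add: C_def)
  have Cmono: "m \<le> n \<Longrightarrow> C m \<subseteq> C n" for m n
  proof (induction n rule: dec_induct)
    case base then show ?case by simp
  next
    case (step n) then show ?case using Csuc[of n] by blast
  qed
  define U where "U = (\<Union>n. C n)"
  have "is_ideal U"
    unfolding is_ideal_def U_def
  proof (intro conjI ballI allI)
    show "0 \<in> (\<Union>n. C n)" using id CS ideal_0 by blast
  next
    fix x y assume "x \<in> (\<Union>n. C n)" "y \<in> (\<Union>n. C n)"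
    then obtain m n where "x \<in> C m" "y \<in> C n" by blast
    moreover have "C m \<subseteq> C (max m n)" "C n \<subseteq> C (max m n)" using Cmono by simp_all
    ultimately have "x \<in> C (max m n)" "y \<in> C (max m n)" by blast+
    then have "x + y \<in> C (max m n)" using id CS ideal_add by metis
    then show "x + y \<in> (\<Union>n. C n)" by blast
  next
    fix r x assume "x \<in> (\<Union>n. C n)"
    then obtain m where "x \<in> C m" by blast
    then have "r * x \<in> C m" using id CS ideal_lmult by metis
    then show "r * x \<in> (\<Union>n. C n)" by blast
  qed
  then obtain F where F: "finite F" "U = gen_ideal F" using N unfolding noetherian_def by blast
  have "\<forall>x\<in>F. \<exists>n. x \<in> C n"
  proof
    fix x assume "x \<in> F"
    then have "x \<in> U" using gen_ideal_sup[OF F(1)] F(2) by blast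
    then show "\<exists>n. x \<in> C n" unfolding U_def by blast
  qed
  then obtain g where g: "\<And>x. x \<in> F \<Longrightarrow> x \<in> C (g x)" by metis
  define m where "m = Max (g ` F)"
  have "F \<subseteq> C m"
  proof
    fix x assume "x \<in> F"
    then have "g x \<le> m" using F(1) by (simp add: m_def)
    then show "x \<in> C m" using g[OF \<open>x\<in>F\<close>] Cmono by blast
  qed
  then have "U \<subseteq> C m" using F(2) gen_ideal_sub id CS by metis
  moreover have "C (Suc m) \<subseteq> U" by (auto simp: U_def)
  ultimately have "C (Suc m) \<subseteq> C m" by (rule order_trans[rotated])
  then show False using Csuc[of m] by (simp add: less_le_not_le)
qed

lemma noeth_acc:
  fixes C :: "nat \<Rightarrow> 'a::comm_ring_1 set"
  assumes N: "noetherian TYPE('a)" and id: "\<And>n. is_ideal (C n)" and mono: "\<And>n. C n \<subseteq> C (Suc n)"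
  shows "\<exists>m. C (Suc m) = C m"
proof -
  obtain I where I: "I \<in> range C" "\<forall>J\<in>range C. I \<subseteq> J \<longrightarrow> J = I"
    using noeth_max[OF N, of "range C"] id by blast
  then obtain m where "I = C m" by blast
  then have "C (Suc m) = C m" using I(2) mono[of m] by auto
  then show ?thesis by blast
qed

definition prin :: "'a::comm_ring_1 \<Rightarrow> 'a set" where "prin y = {y * r | r. True}"

definition minprime :: "'a::comm_ring_1 set \<Rightarrow> 'a set \<Rightarrow> bool" where
  "minprime J P \<longleftrightarrow> is_prime_ideal P \<and> J \<subseteq> P \<and> (\<forall>P'. is_prime_ideal P' \<and> J \<subseteq> P' \<and> P' \<subseteq> P \<longrightarrow> P' = P)"

definition plist :: "'a::comm_ring_1 set \<Rightarrow> nat \<Rightarrow> (nat \<Rightarrow> 'a set) \<Rightarrow> bool" where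
  "plist J n Ps \<longleftrightarrow> (\<forall>i<n. is_prime_ideal (Ps i) \<and> J \<subseteq> Ps i) \<and>
     (\<forall>q. (\<forall>i<n. q i \<in> Ps i) \<longrightarrow> (\<Prod>i<n. q i) \<in> J)"

lemma prin_ideal: "is_ideal (prin y)"
  unfolding is_ideal_def prin_def
proof (intro conjI ballI allI)
  show "0 \<in> {y * r |r. True}" by (rule CollectI, rule exI[of _ 0]) simp
  fix a b assume "a \<in> {y * r |r. True}" "b \<in> {y * r |r. True}"
  then obtain r1 r2 where "a = y * r1" "b = y * r2" by blast
  then have "a + b = y * (r1 + r2)" by (simp add: distrib_left)
  then show "a + b \<in> {y * r |r. True}" by blast
next
  fix c a assume "a \<in> {y * r |r. True}"
  then obtain r1 where "a = y * r1" by blast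
  then have "c * a = y * (c * r1)" by (simp add: algebra_simps)
  then show "c * a \<in> {y * r |r. True}" by blast
qed

lemma prin_mem: "y * r \<in> prin y" unfolding prin_def by blast
lemma prin_self: "y \<in> prin (y::'a::comm_ring_1)" using prin_mem[of y 1] by simp
lemma prin_sub: "is_ideal I \<Longrightarrow> y \<in> I \<Longrightarrow> prin y \<subseteq> I"
  unfolding prin_def using ideal_rmult by blast

lemma prod_split_add: "(\<Prod>i<a+b. (q::nat\<Rightarrow>'b::comm_monoid_mult) i) = (\<Prod>i<a. q i) * (\<Prod>i<b. q (a + i))"
  by (induction b) (simp_all add: mult.assoc)

definition addx :: "'a::comm_ring_1 set \<Rightarrow> 'a \<Rightarrow> 'a set" where
  "addx J x = {j + r * x | j r. j \<in> J}"

lemma addx_ideal: "is_ideal J \<Longrightarrow> is_ideal (addx J x)"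
  unfolding is_ideal_def addx_def
proof (intro conjI ballI allI)
  assume J: "0 \<in> J \<and> (\<forall>x\<in>J. \<forall>y\<in>J. x + y \<in> J) \<and> (\<forall>r. \<forall>x\<in>J. r * x \<in> J)"
  show "0 \<in> {j + r * x |j r. j \<in> J}" using J by (intro CollectI exI[of _ 0]) auto
  fix a b assume "a \<in> {j + r * x |j r. j \<in> J}" "b \<in> {j + r * x |j r. j \<in> J}"
  then obtain j1 r1 j2 r2 where "a = j1 + r1 * x" "b = j2 + r2 * x" "j1 \<in> J" "j2 \<in> J" by blast
  then have "a + b = (j1 + j2) + (r1 + r2) * x" "j1 + j2 \<in> J" using J by (auto simp: algebra_simps)
  then show "a + b \<in> {j + r * x |j r. j \<in> J}" by blast
next
  assume J: "0 \<in> J \<and> (\<forall>x\<in>J. \<forall>y\<in>J. x + y \<in> J) \<and> (\<forall>r. \<forall>x\<in>J. r * x \<in> J)"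
  fix c a assume "a \<in> {j + r * x |j r. j \<in> J}"
  then obtain j1 r1 where "a = j1 + r1 * x" "j1 \<in> J" by blast
  then have "c * a = c * j1 + (c * r1) * x" "c * j1 \<in> J" using J by (auto simp: algebra_simps)
  then show "c * a \<in> {j + r * x |j r. j \<in> J}" by blast
qed

lemma addx_sup: "is_ideal J \<Longrightarrow> J \<subseteq> addx J x"
proof
  fix z assume "z \<in> J"
  moreover have "z = z + 0 * x" by simp
  ultimately show "z \<in> addx J x" unfolding addx_def by blast
qed

lemma addx_mem: "is_ideal J \<Longrightarrow> x \<in> addx J x"
proof -
  assume "is_ideal J"
  then have "0 \<in> J" by (rule ideal_0)
  moreover have "x = 0 + 1 * x" by simp
  ultimately show "x \<in> addx J x" unfolding addx_def by blast
qed

lemma addx_prod: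
  assumes J: "is_ideal J" and xy: "x * y \<in> J" and a: "a \<in> addx J x" and b: "b \<in> addx J y"
  shows "a * b \<in> J"
proof -
  obtain j1 r1 j2 r2 where ab: "a = j1 + r1 * x" "b = j2 + r2 * y" "j1 \<in> J" "j2 \<in> J"
    using a b unfolding addx_def by blast
  have "a * b = j1 * b + (r1 * x) * j2 + (r1 * r2) * (x * y)" by (simp add: ab algebra_simps)
  moreover have "j1 * b \<in> J" "(r1 * x) * j2 \<in> J" "(r1 * r2) * (x * y) \<in> J"
    using ab J xy ideal_rmult ideal_lmult by blast+
  ultimately show ?thesis using J ideal_add by metis
qed

lemma plist_exists:
  fixes J :: "'a::comm_ring_1 set"
  assumes N: "noetherian TYPE('a)" and J: "is_ideal J"
  shows "\<exists>n Ps. plist J n Ps"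
proof (rule ccontr)
  assume nJ: "\<not> ?thesis"
  let ?S = "{J::'a set. is_ideal J \<and> \<not> (\<exists>n Ps. plist J n Ps)}"
  obtain I where I: "I \<in> ?S" "\<forall>J\<in>?S. I \<subseteq> J \<longrightarrow> J = I"
    using noeth_max[OF N, of ?S] J nJ by blast
  have Iid: "is_ideal I" and Ino: "\<not> (\<exists>n Ps. plist I n Ps)" using I(1) by auto
  have "I \<noteq> UNIV"
  proof
    assume "I = UNIV"
    then have "plist I 0 (\<lambda>_. I)" unfolding plist_def by simp
    then show False using Ino by blast
  qed
  moreover have "\<not> is_prime_ideal I"
  proof
    assume "is_prime_ideal I"
    then have "plist I 1 (\<lambda>_. I)" unfolding plist_def by simp
    then show False using Ino by blast
  qed
  ultimately obtain x y where xy: "x * y \<in> I" "x \<notin> I" "y \<notin> I"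
    using Iid unfolding is_prime_ideal_def by blast
  have big: "\<exists>n Ps. plist (addx I z) n Ps" if "z \<notin> I" for z
  proof (rule ccontr)
    assume "\<not> ?thesis"
    then have "addx I z \<in> ?S" using addx_ideal[OF Iid] by blast
    then have "addx I z = I" using I(2) addx_sup[OF Iid] by blast
    then show False using addx_mem[OF Iid, of z] that by simp
  qed
  obtain n1 Ps1 where P1: "plist (addx I x) n1 Ps1" using big xy by blast
  obtain n2 Ps2 where P2: "plist (addx I y) n2 Ps2" using big xy by blast
  define Ps where "Ps i = (if i < n1 then Ps1 i else Ps2 (i - n1))" for i
  have "plist I (n1 + n2) Ps"
    unfolding plist_def
  proof (intro conjI allI impI)
    fix i assume i: "i < n1 + n2"
    have PP: "is_prime_ideal (Ps i) \<and> I \<subseteq> Ps i"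
    proof (cases "i < n1")
      case True
      then have "is_prime_ideal (Ps1 i) \<and> addx I x \<subseteq> Ps1 i" using P1 unfolding plist_def by blast
      then show ?thesis using True addx_sup[OF Iid, of x] unfolding Ps_def by auto
    next
      case False
      then have "i - n1 < n2" using i by simp
      then have "is_prime_ideal (Ps2 (i - n1)) \<and> addx I y \<subseteq> Ps2 (i - n1)" using P2 unfolding plist_def by blast
      then show ?thesis using False addx_sup[OF Iid, of y] unfolding Ps_def by auto
    qed
    then show "is_prime_ideal (Ps i)" by blast
    show "I \<subseteq> Ps i" using PP by blast
  next
    fix q assume q: "\<forall>i<n1 + n2. q i \<in> Ps i"
    have "(\<Prod>i<n1. q i) \<in> addx I x"
    proof -
      have "\<forall>i<n1. q i \<in> Ps1 i"
      proof (intro allI impI)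
        fix i assume "i < n1"
        then show "q i \<in> Ps1 i" using q[rule_format, of i] unfolding Ps_def by simp
      qed
      then show ?thesis using P1 unfolding plist_def by blast
    qed
    moreover have "(\<Prod>i<n2. q (n1 + i)) \<in> addx I y"
    proof -
      have "\<forall>i<n2. q (n1 + i) \<in> Ps2 i"
      proof (intro allI impI)
        fix i assume "i < n2"
        then show "q (n1 + i) \<in> Ps2 i" using q[rule_format, of "n1 + i"] unfolding Ps_def by simp
      qed
      moreover have "\<forall>q. (\<forall>i<n2. q i \<in> Ps2 i) \<longrightarrow> (\<Prod>i<n2. q i) \<in> addx I y"
        using P2 unfolding plist_def by blast
      ultimately show ?thesis by (metis (no_types, lifting))
    qed
    ultimately show "(\<Prod>i<n1 + n2. q i) \<in> I"
      unfolding prod_split_add using addx_prod[OF Iid xy(1)] by blast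
  qed
  then show False using Ino by blast
qed

lemma prime_prod_lessThan: "is_prime_ideal P \<Longrightarrow> (\<Prod>i<n. q i) \<in> P \<Longrightarrow> \<exists>i<n. q i \<in> P"
  using prime_prod_notin[of P "{..<n}" q] by blast

lemma plist_cover:
  assumes "plist J n Ps" "is_prime_ideal P" "J \<subseteq> P"
  shows "\<exists>i<n. Ps i \<subseteq> P"
proof (rule ccontr)
  assume "\<not> ?thesis"
  then have "\<forall>i<n. \<exists>x. x \<in> Ps i \<and> x \<notin> P" by blast
  then obtain q where q: "\<And>i. i < n \<Longrightarrow> q i \<in> Ps i \<and> q i \<notin> P" by metis
  then have "(\<Prod>i<n. q i) \<in> J" using assms(1) unfolding plist_def by blast
  then have "(\<Prod>i<n. q i) \<in> P" using assms(3) by blast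
  then show False using prime_prod_lessThan[OF assms(2)] q by blast
qed

lemma minprime_in_plist:
  assumes "plist J n Ps" "minprime J P"
  shows "\<exists>i<n. P = Ps i"
proof -
  have PP: "is_prime_ideal P" "J \<subseteq> P" using assms(2) unfolding minprime_def by auto
  obtain i where i: "i < n" "Ps i \<subseteq> P" using plist_cover[OF assms(1) PP] by blast
  have "is_prime_ideal (Ps i)" "J \<subseteq> Ps i" using assms(1) i(1) unfolding plist_def by auto
  then have "Ps i = P" using assms(2) i(2) unfolding minprime_def by blast
  then show ?thesis using i(1) by blast
qed

lemma minprime_finite:
  fixes J :: "'a::comm_ring_1 set"
  assumes N: "noetherian TYPE('a)" and J: "is_ideal J"
  shows "finite {P. minprime J P}"
proof -
  obtain n Ps where P: "plist J n Ps" using plist_exists[OF N J] by blast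
  have "{P. minprime J P} \<subseteq> Ps ` {..<n}"
  proof
    fix X assume "X \<in> {P. minprime J P}"
    then obtain i where "i < n" "X = Ps i" using minprime_in_plist[OF P] by blast
    then show "X \<in> Ps ` {..<n}" by blast
  qed
  then show ?thesis by (rule finite_subset) simp
qed

lemma minprime_exists:
  fixes J :: "'a::comm_ring_1 set"
  assumes N: "noetherian TYPE('a)" and J: "is_ideal J" and P: "is_prime_ideal P" "J \<subseteq> P"
  shows "\<exists>P'. minprime J P' \<and> P' \<subseteq> P"
proof -
  obtain n Ps where Pl: "plist J n Ps" using plist_exists[OF N J] by blast
  let ?F = "{Ps i | i. i < n \<and> Ps i \<subseteq> P}"
  obtain i0 where i0: "i0 < n" "Ps i0 \<subseteq> P" using plist_cover[OF Pl P] by blast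
  have fin: "finite ?F" by simp
  have ne: "?F \<noteq> {}" using i0 by blast
  obtain B where B1: "B \<in> ?F" and B2: "\<forall>X\<in>?F. X \<le> B \<longrightarrow> B = X"
    using finite_has_minimal[OF fin ne] by (elim bexE) 
  have B: "B \<in> ?F" "\<And>X. X \<in> ?F \<Longrightarrow> X \<subseteq> B \<Longrightarrow> X = B" using B1 B2 by auto
  then obtain i where i: "i < n" "B = Ps i" "Ps i \<subseteq> P" by blast
  have "minprime J B"
    unfolding minprime_def
  proof (intro conjI allI impI)
    show "is_prime_ideal B" "J \<subseteq> B" using Pl i unfolding plist_def by auto
    fix P' assume P': "is_prime_ideal P' \<and> J \<subseteq> P' \<and> P' \<subseteq> B"
    then obtain l where l: "l < n" "Ps l \<subseteq> P'" using plist_cover[OF Pl] by blast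
    then have "Ps l \<in> ?F" using P' i by blast
    moreover have "Ps l \<subseteq> B" using l P' by blast
    ultimately have "Ps l = B" using B(2) by blast
    then show "P' = B" using l P' by blast
  qed
  then show ?thesis using i by blast
qed

definition sat :: "'a::comm_ring_1 set \<Rightarrow> 'a set \<Rightarrow> 'a set" where
  "sat Q I = {r. \<exists>u. u \<notin> Q \<and> u * r \<in> I}"

definition Art :: "'a::comm_ring_1 set \<Rightarrow> 'a set \<Rightarrow> bool" where
  "Art Q I \<longleftrightarrow> (\<forall>L. (\<forall>n. is_ideal (L n) \<and> sat Q (L n) \<subseteq> L n \<and> I \<subseteq> L n \<and> L (Suc n) \<subseteq> L n)
      \<longrightarrow> (\<exists>n0. \<forall>n\<ge>n0. L n = L n0))"

lemma satI: "u \<notin> Q \<Longrightarrow> u * r \<in> I \<Longrightarrow> r \<in> sat Q I" unfolding sat_def by blast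
lemma satE: "r \<in> sat Q I \<Longrightarrow> (\<And>u. u \<notin> Q \<Longrightarrow> u * r \<in> I \<Longrightarrow> P) \<Longrightarrow> P" unfolding sat_def by blast

lemma sat_ideal:
  assumes Q: "is_prime_ideal Q" and I: "is_ideal I" shows "is_ideal (sat Q I)"
  unfolding is_ideal_def
proof (intro conjI ballI allI)
  show "0 \<in> sat Q I" using I ideal_0 prime_one[OF Q] by (intro satI[of 1]) auto
  fix a b assume "a \<in> sat Q I" "b \<in> sat Q I"
  then obtain u v where uv: "u \<notin> Q" "u * a \<in> I" "v \<notin> Q" "v * b \<in> I" by (meson satE)
  have "(u * v) * (a + b) = v * (u * a) + u * (v * b)" by (simp add: algebra_simps)
  moreover have "v * (u * a) \<in> I" "u * (v * b) \<in> I" using uv I ideal_lmult by blast+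
  ultimately have "(u * v) * (a + b) \<in> I" using I ideal_add by metis
  moreover have "u * v \<notin> Q" using uv prime_notin_mult[OF Q] by blast
  ultimately show "a + b \<in> sat Q I" by (rule satI[rotated])
next
  fix c a assume "a \<in> sat Q I"
  then obtain u where u: "u \<notin> Q" "u * a \<in> I" by (meson satE)
  have "u * (c * a) = c * (u * a)" by (simp add: algebra_simps)
  then have ca: "u * (c * a) \<in> I" using u I ideal_lmult by metis
  show "c * a \<in> sat Q I" by (rule satI[OF u(1) ca])
qed

lemma sat_sup: "is_prime_ideal Q \<Longrightarrow> I \<subseteq> sat Q I"
proof
  fix x assume "is_prime_ideal Q" "x \<in> I"
  then have "1 \<notin> Q" "1 * x \<in> I" using prime_one by auto
  then show "x \<in> sat Q I" by (rule satI)
qed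

lemma sat_mono: "I \<subseteq> J \<Longrightarrow> sat Q I \<subseteq> sat Q J"
  unfolding sat_def by blast

lemma sat_sat: assumes Q: "is_prime_ideal Q" shows "sat Q (sat Q I) \<subseteq> sat Q I"
proof
  fix r assume "r \<in> sat Q (sat Q I)"
  then obtain u where u: "u \<notin> Q" "u * r \<in> sat Q I" by (meson satE)
  then obtain v where v: "v \<notin> Q" "v * (u * r) \<in> I" by (meson satE)
  have "(v * u) * r \<in> I" using v by (simp add: mult.assoc)
  moreover have "v * u \<notin> Q" using u v prime_notin_mult[OF Q] by blast
  ultimately show "r \<in> sat Q I" by (rule satI[rotated])
qed

lemma sat_proper:
  assumes I: "is_ideal I" and s: "sat Q I \<subseteq> I" and ne: "I \<noteq> UNIV"
  shows "I \<subseteq> Q"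
proof
  fix r assume r: "r \<in> I"
  show "r \<in> Q"
  proof (rule ccontr)
    assume "r \<notin> Q"
    then have "1 \<in> sat Q I" using r by (intro satI[of r]) auto
    then have "1 \<in> I" using s by blast
    then have "I = UNIV" using I ideal_lmult[of I 1] by force
    then show False using ne by blast
  qed
qed

lemma greedy:
  fixes I Q :: "'a::comm_ring_1 set"
  assumes sQ: "s \<notin> I"
  shows "(\<exists>z. z \<notin> I \<and> (\<forall>q\<in>Q. z * q \<in> I)) \<or> (\<exists>q::nat\<Rightarrow>'a. (\<forall>i<j. q i \<in> Q) \<and> s * (\<Prod>i<j. q i) \<notin> I)"
proof (induction j)
  case 0
  then show ?case using sQ by simp
next
  case (Suc j)
  then show ?case
  proof
    assume "\<exists>q. (\<forall>i<j. q i \<in> Q) \<and> s * (\<Prod>i<j. q i) \<notin> I"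
    then obtain q where q: "\<forall>i<j. q i \<in> Q" "s * (\<Prod>i<j. q i) \<notin> I" by blast
    show ?case
    proof (cases "\<forall>q'\<in>Q. (s * (\<Prod>i<j. q i)) * q' \<in> I")
      case True then show ?thesis using q(2) by blast
    next
      case False
      then obtain q' where q': "q' \<in> Q" "(s * (\<Prod>i<j. q i)) * q' \<notin> I" by blast
      define q2 where "q2 = q(j := q')"
      have "(\<Prod>i<j. q2 i) = (\<Prod>i<j. q i)" unfolding q2_def by (rule prod.cong) auto
      then have "s * (\<Prod>i<Suc j. q2 i) = (s * (\<Prod>i<j. q i)) * q'"
        by (simp add: q2_def mult.assoc)
      moreover have "\<forall>i<Suc j. q2 i \<in> Q" using q(1) q'(1) unfolding q2_def by (simp add: less_Suc_eq)
      ultimately show ?thesis using q'(2) by metis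
    qed
  qed simp
qed

lemma artinian:
  fixes J Q :: "'a::comm_ring_1 set"
  assumes N: "noetherian TYPE('a)" and Qp: "is_prime_ideal Q" and J: "is_ideal J"
    and s: "s \<notin> Q" and hyp: "\<forall>q::nat\<Rightarrow>'a. (\<forall>i<M. q i \<in> Q) \<longrightarrow> s * (\<Prod>i<M. q i) \<in> J"
  shows "Art Q J"
proof (rule ccontr)
  assume nA: "\<not> Art Q J"
  let ?S = "{I. is_ideal I \<and> sat Q I \<subseteq> I \<and> J \<subseteq> I \<and> \<not> Art Q I}"
  have "\<not> Art Q (sat Q J)"
  proof
    assume A: "Art Q (sat Q J)"
    have "Art Q J" unfolding Art_def
    proof (intro allI impI)
      fix L assume L: "\<forall>n. is_ideal (L n) \<and> sat Q (L n) \<subseteq> L n \<and> J \<subseteq> L n \<and> L (Suc n) \<subseteq> L n"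
      have "\<forall>n. sat Q J \<subseteq> L n"
      proof
        fix n have "sat Q J \<subseteq> sat Q (L n)" using L sat_mono by blast
        then show "sat Q J \<subseteq> L n" using L by blast
      qed
      then have "\<forall>n. is_ideal (L n) \<and> sat Q (L n) \<subseteq> L n \<and> sat Q J \<subseteq> L n \<and> L (Suc n) \<subseteq> L n" using L by blast
      then show "\<exists>n0. \<forall>n\<ge>n0. L n = L n0" using A unfolding Art_def by blast
    qed
    then show False using nA by blast
  qed
  then have "sat Q J \<in> ?S" using sat_ideal[OF Qp J] sat_sat[OF Qp] sat_sup[OF Qp] by blast
  then have "?S \<noteq> {}" by blast
  then obtain I where I: "I \<in> ?S" "\<forall>I'\<in>?S. I \<subseteq> I' \<longrightarrow> I' = I"
    using noeth_max[OF N, of ?S] by blast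
  have Iid: "is_ideal I" and Isat: "sat Q I \<subseteq> I" and JI: "J \<subseteq> I" and nAI: "\<not> Art Q I" using I(1) by auto
  have "I \<noteq> UNIV"
  proof
    assume "I = UNIV"
    then have "Art Q I" unfolding Art_def by auto
    then show False using nAI by blast
  qed
  then have IQ: "I \<subseteq> Q" using sat_proper[OF Iid Isat] by blast
  have sI: "s \<notin> I" using s IQ by blast
  obtain z where z: "z \<notin> I" "\<forall>q\<in>Q. z * q \<in> I"
  proof -
    have "\<not> (\<exists>q::nat\<Rightarrow>'a. (\<forall>i<M. q i \<in> Q) \<and> s * (\<Prod>i<M. q i) \<notin> I)" using hyp JI by blast
    then show ?thesis using greedy[OF sI, of Q M] that by blast
  qed
  define Z where "Z = sat Q (addx I z)"
  have Zid: "is_ideal Z" unfolding Z_def by (rule sat_ideal[OF Qp addx_ideal[OF Iid]])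
  have Zsat: "sat Q Z \<subseteq> Z" unfolding Z_def by (rule sat_sat[OF Qp])
  have IZ: "I \<subseteq> Z" unfolding Z_def using addx_sup[OF Iid] sat_sup[OF Qp] by blast
  have zZ: "z \<in> Z" unfolding Z_def using addx_mem[OF Iid] sat_sup[OF Qp] by blast
  have AZ: "Art Q Z"
  proof (rule ccontr)
    assume "\<not> Art Q Z"
    then have "Z \<in> ?S" using Zid Zsat IZ JI by blast
    then have "Z = I" using I(2) IZ by blast
    then show False using zZ z(1) by blast
  qed
  have "Art Q I" unfolding Art_def
  proof (intro allI impI)
    fix L assume L: "\<forall>n. is_ideal (L n) \<and> sat Q (L n) \<subseteq> L n \<and> I \<subseteq> L n \<and> L (Suc n) \<subseteq> L n"
    define L' where "L' n = sat Q (addx (L n) z)" for n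
    have L'c: "\<forall>n. is_ideal (L' n) \<and> sat Q (L' n) \<subseteq> L' n \<and> Z \<subseteq> L' n \<and> L' (Suc n) \<subseteq> L' n"
    proof
      fix n
      have Ln: "is_ideal (L n)" "I \<subseteq> L n" "L (Suc n) \<subseteq> L n" using L by auto
      have "is_ideal (L' n)" unfolding L'_def by (rule sat_ideal[OF Qp addx_ideal[OF Ln(1)]])
      moreover have "sat Q (L' n) \<subseteq> L' n" unfolding L'_def by (rule sat_sat[OF Qp])
      moreover have "addx I z \<subseteq> addx (L n) z" using Ln(2) unfolding addx_def by blast
      then have "Z \<subseteq> L' n" unfolding Z_def L'_def by (rule sat_mono)
      moreover have "addx (L (Suc n)) z \<subseteq> addx (L n) z" using Ln(3) unfolding addx_def by blast
      then have "L' (Suc n) \<subseteq> L' n" unfolding L'_def by (rule sat_mono)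
      ultimately show "is_ideal (L' n) \<and> sat Q (L' n) \<subseteq> L' n \<and> Z \<subseteq> L' n \<and> L' (Suc n) \<subseteq> L' n" by blast
    qed
    obtain n1 where n1: "\<forall>n\<ge>n1. L' n = L' n1" using AZ L'c unfolding Art_def by blast
    obtain n2 where n2: "\<forall>n\<ge>n2. z \<in> L n \<longrightarrow> z \<in> L (Suc n)"
    proof (cases "\<exists>n. z \<notin> L n")
      case True
      then obtain n0 where n0: "z \<notin> L n0" by blast
      have "z \<notin> L n" if "n \<ge> n0" for n
        using that
      proof (induction n rule: dec_induct)
        case base then show ?case using n0 .
      next
        case (step n) then show ?case using L by blast
      qed
      then show ?thesis using that[of n0] by blast
    next
      case False then show ?thesis using that[of 0] by blast
    qed
    define n3 where "n3 = max n1 n2"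
    have stepL: "L (Suc n) = L n" if n: "n \<ge> n3" for n
    proof
      show "L (Suc n) \<subseteq> L n" using L by blast
      show "L n \<subseteq> L (Suc n)"
      proof
        fix w assume w: "w \<in> L n"
        have Ln: "is_ideal (L n)" "sat Q (L n) \<subseteq> L n" "I \<subseteq> L n" using L by auto
        have Ls: "is_ideal (L (Suc n))" "sat Q (L (Suc n)) \<subseteq> L (Suc n)" "I \<subseteq> L (Suc n)" using L by auto
        have "w \<in> L' n" unfolding L'_def using w addx_sup[OF Ln(1)] sat_sup[OF Qp] by blast
        moreover have "L' n = L' (Suc n)" using n1 n unfolding n3_def by (metis le_SucI max.boundedE)
        ultimately have "w \<in> sat Q (addx (L (Suc n)) z)" unfolding L'_def by simp
        then obtain u where u: "u \<notin> Q" "u * w \<in> addx (L (Suc n)) z" by (meson satE)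
        then obtain l r where lr: "u * w = l + r * z" "l \<in> L (Suc n)" unfolding addx_def by blast
        have "r * z \<in> L (Suc n)"
        proof (cases "r \<in> Q")
          case True
          then have "z * r \<in> I" using z(2) by blast
          then show ?thesis using Ls(3) by (simp add: mult.commute subsetD)
        next
          case False
          have "r * z = u * w - l" using lr by (simp add: algebra_simps)
          moreover have "u * w - l \<in> L n" using w lr(2) L Ln(1) ideal_lmult ideal_diff by blast
          ultimately have "r * z \<in> L n" by simp
          then have "z \<in> L n" using Ln(2) False by (blast intro: satI)
          then have "z \<in> L (Suc n)" using n2 n unfolding n3_def by simp
          then show ?thesis using Ls(1) ideal_lmult by blast
        qed
        then have "u * w \<in> L (Suc n)" using lr Ls(1) ideal_add by metis
        then show "w \<in> L (Suc n)" using Ls(2) u(1) by (blast intro: satI)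
      qed
    qed
    have "L n = L n3" if "n \<ge> n3" for n
      using that
    proof (induction n rule: dec_induct)
      case base then show ?case by simp
    next
      case (step n) then show ?case using stepL[of n] by simp
    qed
    then show "\<exists>n0. \<forall>n\<ge>n0. L n = L n0" by blast
  qed
  then show False using nAI by blast
qed

lemma loc_data:
  fixes J Q :: "'a::comm_ring_1 set"
  assumes N: "noetherian TYPE('a)" and J: "is_ideal J" and mp: "minprime J Q"
  shows "\<exists>s M. s \<notin> Q \<and> (\<forall>q::nat\<Rightarrow>'a. (\<forall>i<M. q i \<in> Q) \<longrightarrow> s * (\<Prod>i<M. q i) \<in> J)"
proof -
  obtain n Ps where Pl: "plist J n Ps" using plist_exists[OF N J] by blast
  have Qp: "is_prime_ideal Q" using mp unfolding minprime_def by blast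
  define B where "B = {i. i < n \<and> \<not> Ps i \<subseteq> Q}"
  have "\<forall>i\<in>B. \<exists>t. t \<in> Ps i \<and> t \<notin> Q" unfolding B_def by blast
  then obtain t where t: "\<And>i. i \<in> B \<Longrightarrow> t i \<in> Ps i \<and> t i \<notin> Q" by metis
  define s where "s = (\<Prod>i\<in>B. t i)"
  have s: "s \<notin> Q" unfolding s_def
  proof (rule prime_prod_notin[OF Qp])
    fix i assume "i \<in> B" then show "t i \<notin> Q" using t by blast
  qed
  have nB: "Ps i = Q" if "i < n" "i \<notin> B" for i
  proof -
    have "is_prime_ideal (Ps i)" "J \<subseteq> Ps i" using Pl that(1) unfolding plist_def by auto
    moreover have "Ps i \<subseteq> Q" using that unfolding B_def by blast
    moreover have "\<forall>P'. is_prime_ideal P' \<and> J \<subseteq> P' \<and> P' \<subseteq> Q \<longrightarrow> P' = Q"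
      using mp unfolding minprime_def by blast
    ultimately show ?thesis by blast
  qed
  have Bsub: "B \<subseteq> {..<n}" unfolding B_def by blast
  have "\<forall>q::nat\<Rightarrow>'a. (\<forall>i<n. q i \<in> Q) \<longrightarrow> s * (\<Prod>i<n. q i) \<in> J"
  proof (intro allI impI)
    fix q :: "nat \<Rightarrow> 'a" assume q: "\<forall>i<n. q i \<in> Q"
    define q' where "q' i = (if i \<in> B then t i else q i)" for i
    have "\<forall>i<n. q' i \<in> Ps i"
    proof (intro allI impI)
      fix i assume i: "i < n"
      show "q' i \<in> Ps i"
      proof (cases "i \<in> B")
        case True then show ?thesis using t unfolding q'_def by simp
      next
        case False then show ?thesis using nB[OF i False] q i unfolding q'_def by simp
      qed
    qed
    then have inJ: "(\<Prod>i<n. q' i) \<in> J" using Pl unfolding plist_def by blast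
    have e1: "(\<Prod>i<n. q' i) = (\<Prod>i\<in>B. t i) * (\<Prod>i\<in>{..<n} - B. q i)"
    proof -
      have "(\<Prod>i<n. q' i) = (\<Prod>i\<in>{..<n} \<inter> {x. x \<in> B}. t i) * (\<Prod>i\<in>{..<n} \<inter> - {x. x \<in> B}. q i)"
        unfolding q'_def by (rule prod.If_cases) simp
      moreover have "{..<n} \<inter> {x. x \<in> B} = B" using Bsub by blast
      moreover have "{..<n} \<inter> - {x. x \<in> B} = {..<n} - B" by blast
      ultimately show ?thesis by simp
    qed
    have e2: "(\<Prod>i<n. q i) = (\<Prod>i\<in>{..<n} - B. q i) * (\<Prod>i\<in>B. q i)"
      by (rule prod.subset_diff[OF Bsub]) simp
    have "s * (\<Prod>i<n. q i) = (\<Prod>i<n. q' i) * (\<Prod>i\<in>B. q i)"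
      unfolding e1 e2 s_def by (simp add: mult.assoc)
    then show "s * (\<Prod>i<n. q i) \<in> J" using inJ J ideal_rmult by metis
  qed
  then show ?thesis using s by blast
qed


definition Tp :: "'a::comm_ring_1 set \<Rightarrow> 'a \<Rightarrow> nat \<Rightarrow> 'a set" where
  "Tp P p n = {f. \<exists>u r. u \<notin> P \<and> u * f = p ^ n * r}"

lemma Tp_ideal: assumes P: "is_prime_ideal P" shows "is_ideal (Tp P p n)"
  unfolding is_ideal_def Tp_def
proof (intro conjI ballI allI)
  show "0 \<in> {f. \<exists>u r. u \<notin> P \<and> u * f = p ^ n * r}" using prime_one[OF P]
    by (intro CollectI exI[of _ 1] exI[of _ 0]) simp
  fix a b assume "a \<in> {f. \<exists>u r. u \<notin> P \<and> u * f = p ^ n * r}" "b \<in> {f. \<exists>u r. u \<notin> P \<and> u * f = p ^ n * r}"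
  then obtain u1 r1 u2 r2 where h: "u1 \<notin> P" "u1 * a = p ^ n * r1" "u2 \<notin> P" "u2 * b = p ^ n * r2" by blast
  have "(u1 * u2) * (a + b) = u2 * (u1 * a) + u1 * (u2 * b)" by (simp add: algebra_simps)
  also have "\<dots> = u2 * (p ^ n * r1) + u1 * (p ^ n * r2)" by (simp only: h(2) h(4))
  also have "\<dots> = p ^ n * (u2 * r1 + u1 * r2)" by (simp add: algebra_simps)
  finally have "(u1 * u2) * (a + b) = p ^ n * (u2 * r1 + u1 * r2)" .
  moreover have "u1 * u2 \<notin> P" using h prime_notin_mult[OF P] by blast
  ultimately show "a + b \<in> {f. \<exists>u r. u \<notin> P \<and> u * f = p ^ n * r}" by blast
next
  fix c a assume "a \<in> {f. \<exists>u r. u \<notin> P \<and> u * f = p ^ n * r}"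
  then obtain u1 r1 where h: "u1 \<notin> P" "u1 * a = p ^ n * r1" by blast
  have "u1 * (c * a) = c * (u1 * a)" by (simp add: algebra_simps)
  also have "\<dots> = c * (p ^ n * r1)" by (simp only: h(2))
  also have "\<dots> = p ^ n * (c * r1)" by (simp add: algebra_simps)
  finally have "u1 * (c * a) = p ^ n * (c * r1)" .
  then show "c * a \<in> {f. \<exists>u r. u \<notin> P \<and> u * f = p ^ n * r}" using h(1) by blast
qed

lemma Tp_sat: assumes P: "is_prime_ideal P" and v: "v \<notin> P" and f: "v * f \<in> Tp P p n"
  shows "f \<in> Tp P p n"
proof -
  obtain u r where h: "u \<notin> P" "u * (v * f) = p ^ n * r" using f unfolding Tp_def by blast
  have "(u * v) * f = p ^ n * r" using h(2) by (simp add: mult.assoc)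
  moreover have "u * v \<notin> P" using h(1) v prime_notin_mult[OF P] by blast
  ultimately show ?thesis unfolding Tp_def by blast
qed

lemma Tp_pow: assumes P: "is_prime_ideal P" shows "p ^ n \<in> Tp P p n"
  unfolding Tp_def using prime_one[OF P] by (intro CollectI exI[of _ 1] exI[of _ 1]) simp

lemma Tp_dec: "Tp P p (Suc n) \<subseteq> Tp P p n"
proof
  fix f assume "f \<in> Tp P p (Suc n)"
  then obtain u r where "u \<notin> P" "u * f = p ^ Suc n * r" unfolding Tp_def by blast
  moreover have "p ^ Suc n * r = p ^ n * (p * r)" by (simp add: algebra_simps)
  ultimately have "u \<notin> P \<and> u * f = p ^ n * (p * r)" by simp
  then show "f \<in> Tp P p n" unfolding Tp_def by blast
qed


lemma pit:
  fixes y p :: "'a::idom"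
  assumes N: "noetherian TYPE('a)" and mp: "minprime (prin y) Q"
    and P: "is_prime_ideal P" and PQ: "P \<subseteq> Q" "P \<noteq> Q" and pP: "p \<in> P" and p0: "p \<noteq> 0"
  shows False
proof -
  have Qp: "is_prime_ideal Q" and yQ0: "prin y \<subseteq> Q" using mp unfolding minprime_def by auto
  have yQ: "y \<in> Q" using yQ0 prin_self by blast
  have mpall: "\<forall>P'. is_prime_ideal P' \<and> prin y \<subseteq> P' \<and> P' \<subseteq> Q \<longrightarrow> P' = Q"
    using mp unfolding minprime_def by blast
  have yP: "y \<notin> P"
  proof
    assume "y \<in> P"
    then have "prin y \<subseteq> P" using prin_sub[OF prime_ideal[OF P]] by blast
    then have "P = Q" using mpall P PQ(1) by blast
    then show False using PQ(2) by blast
  qed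
  obtain s M where s: "s \<notin> Q" "\<forall>q::nat\<Rightarrow>'a. (\<forall>i<M. q i \<in> Q) \<longrightarrow> s * (\<Prod>i<M. q i) \<in> prin y"
    using loc_data[OF N prin_ideal mp] by blast
  have Art: "Art Q (prin y)" using artinian[OF N Qp prin_ideal s(1) s(2)] .
  define T where "T = Tp P p"
  have Tid: "is_ideal (T k)" for k unfolding T_def by (rule Tp_ideal[OF P])
  have Tdec: "T (Suc k) \<subseteq> T k" for k unfolding T_def by (rule Tp_dec)
  define L where "L k = sat Q (addx (T k) y)" for k
  have Lc: "\<forall>k. is_ideal (L k) \<and> sat Q (L k) \<subseteq> L k \<and> prin y \<subseteq> L k \<and> L (Suc k) \<subseteq> L k"
  proof
    fix k
    have "is_ideal (L k)" unfolding L_def by (rule sat_ideal[OF Qp addx_ideal[OF Tid]])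
    moreover have "sat Q (L k) \<subseteq> L k" unfolding L_def by (rule sat_sat[OF Qp])
    moreover have "prin y \<subseteq> L k"
    proof
      fix x assume "x \<in> prin y"
      then obtain r where "x = y * r" unfolding prin_def by blast
      then have "x = 0 + r * y" by (simp add: mult.commute)
      moreover have "0 \<in> T k" by (rule ideal_0[OF Tid])
      ultimately have "x \<in> addx (T k) y" unfolding addx_def by blast
      then show "x \<in> L k" unfolding L_def using sat_sup[OF Qp, of "addx (T k) y"] by blast
    qed
    moreover have "addx (T (Suc k)) y \<subseteq> addx (T k) y" using Tdec[of k] unfolding addx_def by blast
    then have "L (Suc k) \<subseteq> L k" unfolding L_def by (rule sat_mono)
    ultimately show "is_ideal (L k) \<and> sat Q (L k) \<subseteq> L k \<and> prin y \<subseteq> L k \<and> L (Suc k) \<subseteq> L k" by blast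
  qed
  have "\<exists>n0. \<forall>k\<ge>n0. L k = L n0" by (rule HOL.mp[OF spec[OF Art[unfolded Art_def], of L] Lc])
  then obtain n where n0: "\<forall>k\<ge>n. L k = L n" by blast
  have Leq: "L (Suc n) = L n" by (rule n0[rule_format]) simp
  have A: "\<exists>u g h. u \<notin> Q \<and> g \<in> T n \<and> h \<in> T (Suc n) \<and> u * f = y * g + h" if f: "f \<in> T n" for f
  proof -
    have "f \<in> L n" unfolding L_def using f addx_sup[OF Tid] sat_sup[OF Qp] by blast
    then have "f \<in> sat Q (addx (T (Suc n)) y)" using Leq unfolding L_def by simp
    then obtain u where u: "u \<notin> Q" "u * f \<in> addx (T (Suc n)) y" by (meson satE)
    then obtain h r where hr: "u * f = h + r * y" "h \<in> T (Suc n)" unfolding addx_def by blast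
    have "y * r = u * f - h" using hr(1) by (simp add: algebra_simps)
    moreover have "u * f - h \<in> T n"
    proof -
      have "h \<in> T n" using hr(2) Tdec by blast
      then show ?thesis using ideal_diff[OF Tid ideal_lmult[OF Tid f]] by blast
    qed
    ultimately have "y * r \<in> T n" by simp
    then have "r \<in> T n" unfolding T_def by (rule Tp_sat[OF P yP])
    moreover have "u * f = y * r + h" using hr(1) by (simp add: algebra_simps)
    ultimately show ?thesis using u(1) hr(2) by blast
  qed
  have B: "\<exists>u g h. u \<notin> Q \<and> g \<in> T n \<and> h \<in> T (Suc n) \<and> u * p ^ n = y ^ j * g + h" for j
  proof (induction j)
    case 0
    have "1 \<notin> Q" "p ^ n \<in> T n" "0 \<in> T (Suc n)" using prime_one[OF Qp] Tp_pow[OF P] ideal_0[OF Tid] unfolding T_def by auto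
    moreover have "1 * p ^ n = y ^ 0 * p ^ n + 0" by simp
    ultimately show ?case by blast
  next
    case (Suc j)
    then obtain u g h where ugh: "u \<notin> Q" "g \<in> T n" "h \<in> T (Suc n)" "u * p ^ n = y ^ j * g + h" by blast
    obtain u' g' h' where ugh': "u' \<notin> Q" "g' \<in> T n" "h' \<in> T (Suc n)" "u' * g = y * g' + h'" using A[OF ugh(2)] by blast
    have "(u' * u) * p ^ n = u' * (u * p ^ n)" by (simp add: mult.assoc)
    also have "\<dots> = y ^ j * (u' * g) + u' * h" by (simp add: ugh(4) algebra_simps)
    also have "\<dots> = y ^ j * (y * g' + h') + u' * h" by (simp add: ugh'(4))
    also have "\<dots> = y ^ Suc j * g' + (y ^ j * h' + u' * h)" by (simp add: algebra_simps)
    finally have e: "(u' * u) * p ^ n = y ^ Suc j * g' + (y ^ j * h' + u' * h)" .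
    have "y ^ j * h' + u' * h \<in> T (Suc n)" by (rule ideal_add[OF Tid ideal_lmult[OF Tid ugh'(3)] ideal_lmult[OF Tid ugh(3)]])
    moreover have "u' * u \<notin> Q" using ugh(1) ugh'(1) prime_notin_mult[OF Qp] by blast
    ultimately show ?case using e ugh'(2) by blast
  qed
  obtain d where d: "d \<notin> P" "\<And>f. f \<in> T n \<Longrightarrow> \<exists>r. d * f = p ^ n * r"
  proof -
    obtain F where F: "finite F" "T n = gen_ideal F" using N Tid unfolding noetherian_def by blast
    have FT: "F \<subseteq> T n" using gen_ideal_sup[OF F(1)] F(2) by blast
    have "\<forall>g\<in>F. \<exists>u r. u \<notin> P \<and> u * g = p ^ n * r" using FT unfolding T_def Tp_def by blast
    then obtain ug rg where ur: "\<And>g. g \<in> F \<Longrightarrow> ug g \<notin> P \<and> ug g * g = p ^ n * rg g" by metis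
    define d where "d = (\<Prod>g\<in>F. ug g)"
    have dP: "d \<notin> P" unfolding d_def
    proof (rule prime_prod_notin[OF P])
      fix g assume "g \<in> F" then show "ug g \<notin> P" using ur by blast
    qed
    define W where "W = {f. \<exists>r. d * f = p ^ n * r}"
    have Wid: "is_ideal W" unfolding is_ideal_def W_def
    proof (intro conjI ballI allI)
      show "0 \<in> {f. \<exists>r. d * f = p ^ n * r}" by (intro CollectI exI[of _ 0]) simp
      fix a b assume "a \<in> {f. \<exists>r. d * f = p ^ n * r}" "b \<in> {f. \<exists>r. d * f = p ^ n * r}"
      then obtain r1 r2 where "d * a = p ^ n * r1" "d * b = p ^ n * r2" by blast
      then have "d * (a + b) = p ^ n * (r1 + r2)" by (simp add: algebra_simps)
      then show "a + b \<in> {f. \<exists>r. d * f = p ^ n * r}" by blast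
    next
      fix c a assume "a \<in> {f. \<exists>r. d * f = p ^ n * r}"
      then obtain r1 where h: "d * a = p ^ n * r1" by blast
      have "d * (c * a) = c * (d * a)" by (simp add: algebra_simps)
      also have "\<dots> = c * (p ^ n * r1)" by (simp only: h)
      also have "\<dots> = p ^ n * (c * r1)" by (simp add: algebra_simps)
      finally show "c * a \<in> {f. \<exists>r. d * f = p ^ n * r}" by blast
    qed
    have "F \<subseteq> W"
    proof
      fix g assume g: "g \<in> F"
      have "d = ug g * (\<Prod>g'\<in>F - {g}. ug g')" unfolding d_def by (rule prod.remove[OF F(1) g])
      then have "d * g = (\<Prod>g'\<in>F - {g}. ug g') * (ug g * g)" by (simp add: algebra_simps)
      also have "\<dots> = p ^ n * ((\<Prod>g'\<in>F - {g}. ug g') * rg g)" using ur[OF g] by (simp add: algebra_simps)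
      finally show "g \<in> W" unfolding W_def by blast
    qed
    then have "T n \<subseteq> W" using F(2) gen_ideal_sub[OF Wid] by metis
    then show ?thesis using that[OF dP] unfolding W_def by blast
  qed
  have D: "\<exists>u r. u \<notin> Q \<and> d * u - y ^ j * r \<in> P" for j
  proof -
    obtain u g h where ugh: "u \<notin> Q" "g \<in> T n" "h \<in> T (Suc n)" "u * p ^ n = y ^ j * g + h" using B by blast
    obtain r where r: "d * g = p ^ n * r" using d(2)[OF ugh(2)] by blast
    obtain v r' where vr: "v \<notin> P" "v * h = p ^ Suc n * r'" using ugh(3) unfolding T_def Tp_def by blast
    have "p ^ n * (v * (d * u - y ^ j * r)) = v * d * (u * p ^ n) - v * y ^ j * (p ^ n * r)"
      by (simp add: algebra_simps)
    also have "\<dots> = v * d * (y ^ j * g + h) - v * y ^ j * (d * g)" by (simp only: ugh(4) r)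
    also have "\<dots> = d * (v * h)" by (simp add: algebra_simps)
    also have "\<dots> = d * (p ^ Suc n * r')" by (simp only: vr(2))
    also have "\<dots> = p ^ n * (p * (d * r'))" by (simp add: algebra_simps)
    finally have "v * (d * u - y ^ j * r) = p * (d * r')" using p0 by simp
    moreover have "p * (d * r') \<in> P" by (rule ideal_rmult[OF prime_ideal[OF P] pP])
    ultimately have "v * (d * u - y ^ j * r) \<in> P" by simp
    then have "d * u - y ^ j * r \<in> P" using vr(1) prime_mult[OF P] by blast
    then show ?thesis using ugh(1) by blast
  qed
  define C where "C j = {x. \<exists>u c \<pi>. u \<notin> Q \<and> \<pi> \<in> P \<and> u * y ^ j * x = d * c + \<pi>}" for j
  have Pid: "is_ideal P" using prime_ideal[OF P] .
  have Cid: "is_ideal (C j)" for j unfolding is_ideal_def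
  proof (intro conjI ballI allI)
    show "0 \<in> C j" unfolding C_def using prime_one[OF Qp] ideal_0[OF Pid]
      by (intro CollectI exI[of _ 1] exI[of _ 0]) simp
    fix a b assume "a \<in> C j" "b \<in> C j"
    then obtain u1 c1 \<pi>1 u2 c2 \<pi>2 where h: "u1 \<notin> Q" "\<pi>1 \<in> P" "u1 * y ^ j * a = d * c1 + \<pi>1"
      "u2 \<notin> Q" "\<pi>2 \<in> P" "u2 * y ^ j * b = d * c2 + \<pi>2" unfolding C_def by blast
    have "(u1 * u2) * y ^ j * (a + b) = u2 * (u1 * y ^ j * a) + u1 * (u2 * y ^ j * b)" by (simp add: algebra_simps)
    also have "\<dots> = u2 * (d * c1 + \<pi>1) + u1 * (d * c2 + \<pi>2)" by (simp only: h(3) h(6))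
    also have "\<dots> = d * (u2 * c1 + u1 * c2) + (u2 * \<pi>1 + u1 * \<pi>2)" by (simp add: algebra_simps)
    finally have e: "(u1 * u2) * y ^ j * (a + b) = d * (u2 * c1 + u1 * c2) + (u2 * \<pi>1 + u1 * \<pi>2)" .
    have "u2 * \<pi>1 + u1 * \<pi>2 \<in> P" by (rule ideal_add[OF Pid ideal_lmult[OF Pid h(2)] ideal_lmult[OF Pid h(5)]])
    moreover have "u1 * u2 \<notin> Q" using h prime_notin_mult[OF Qp] by blast
    ultimately show "a + b \<in> C j" unfolding C_def using e by blast
  next
    fix c' a assume "a \<in> C j"
    then obtain u1 c1 \<pi>1 where h: "u1 \<notin> Q" "\<pi>1 \<in> P" "u1 * y ^ j * a = d * c1 + \<pi>1" unfolding C_def by blast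
    have "u1 * y ^ j * (c' * a) = c' * (u1 * y ^ j * a)" by (simp add: algebra_simps)
    also have "\<dots> = c' * (d * c1 + \<pi>1)" by (simp only: h(3))
    also have "\<dots> = d * (c' * c1) + c' * \<pi>1" by (simp add: algebra_simps)
    finally have "u1 * y ^ j * (c' * a) = d * (c' * c1) + c' * \<pi>1" .
    moreover have "c' * \<pi>1 \<in> P" by (rule ideal_lmult[OF Pid h(2)])
    ultimately show "c' * a \<in> C j" unfolding C_def using h(1) by blast
  qed
  have Cmono: "C j \<subseteq> C (Suc j)" for j
  proof
    fix x assume "x \<in> C j"
    then obtain u1 c1 \<pi>1 where h: "u1 \<notin> Q" "\<pi>1 \<in> P" "u1 * y ^ j * x = d * c1 + \<pi>1" unfolding C_def by blast
    have "u1 * y ^ Suc j * x = y * (u1 * y ^ j * x)" by (simp add: algebra_simps)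
    also have "\<dots> = y * (d * c1 + \<pi>1)" by (simp only: h(3))
    also have "\<dots> = d * (y * c1) + y * \<pi>1" by (simp add: algebra_simps)
    finally have "u1 * y ^ Suc j * x = d * (y * c1) + y * \<pi>1" .
    moreover have "y * \<pi>1 \<in> P" by (rule ideal_lmult[OF Pid h(2)])
    ultimately show "x \<in> C (Suc j)" unfolding C_def using h(1) by blast
  qed
  obtain j0 where j0: "C (Suc j0) = C j0" using noeth_acc[of C, OF N Cid Cmono] by blast
  obtain u1 r where ur: "u1 \<notin> Q" "d * u1 - y ^ Suc j0 * r \<in> P" using D by blast
  define \<pi>1 where "\<pi>1 = d * u1 - y ^ Suc j0 * r"
  have "1 * y ^ Suc j0 * r = d * u1 + (- \<pi>1)" unfolding \<pi>1_def by simp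
  moreover have "- \<pi>1 \<in> P" using ur(2) Pid ideal_neg unfolding \<pi>1_def by blast
  ultimately have "r \<in> C (Suc j0)" unfolding C_def using prime_one[OF Qp] by blast
  then have "r \<in> C j0" using j0 by simp
  then obtain u' c \<pi>' where h: "u' \<notin> Q" "\<pi>' \<in> P" "u' * y ^ j0 * r = d * c + \<pi>'" unfolding C_def by blast
  have "d * (u' * u1 - y * c) = u' * (d * u1 - y ^ Suc j0 * r) + y * (u' * y ^ j0 * r - d * c)"
    by (simp add: algebra_simps)
  also have "\<dots> = u' * \<pi>1 + y * (d * c + \<pi>' - d * c)" by (simp only: \<pi>1_def h(3))
  also have "\<dots> = u' * \<pi>1 + y * \<pi>'" by simp
  finally have e: "d * (u' * u1 - y * c) = u' * \<pi>1 + y * \<pi>'" .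
  have "u' * \<pi>1 + y * \<pi>' \<in> P" using ideal_add[OF Pid ideal_lmult[OF Pid ur(2)] ideal_lmult[OF Pid h(2)]] unfolding \<pi>1_def .
  then have "d * (u' * u1 - y * c) \<in> P" using e by simp
  then have "u' * u1 - y * c \<in> P" using d(1) prime_mult[OF P] by blast
  then have "u' * u1 - y * c \<in> Q" using PQ(1) by blast
  moreover have "y * c \<in> Q" by (rule ideal_rmult[OF prime_ideal[OF Qp] yQ])
  ultimately have "(u' * u1 - y * c) + y * c \<in> Q" by (rule ideal_add[OF prime_ideal[OF Qp]])
  then have "u' * u1 \<in> Q" by simp
  then show False using h(1) ur(1) prime_mult[OF Qp] by blast
qed

lemma hom_0: "is_ring_hom \<phi> \<Longrightarrow> \<phi> 0 = 0"
  unfolding is_ring_hom_def by (metis add_cancel_right_right add_0)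
lemma hom_diff: "is_ring_hom \<phi> \<Longrightarrow> \<phi> (a - b) = \<phi> a - \<phi> b"
  unfolding is_ring_hom_def by (metis add_diff_cancel diff_add_cancel)
lemma hom_inv:
  fixes \<phi> :: "'k::field \<Rightarrow> 'a::comm_ring_1"
  shows "is_ring_hom \<phi> \<Longrightarrow> x \<noteq> 0 \<Longrightarrow> \<phi> (inverse x) * \<phi> x = 1"
  unfolding is_ring_hom_def by (metis left_inverse)

lemma interp:
  fixes \<phi> :: "'k::field \<Rightarrow> 'a::comm_ring_1"
  assumes F: "is_ideal F" and alg: "is_ring_hom \<phi>" and S: "finite S"
  shows "degree f < card S \<Longrightarrow> (\<forall>l\<in>S. poly f (\<phi> l) \<in> F) \<Longrightarrow> coeff f i \<in> F"
  using S
proof (induction S arbitrary: f i rule: finite_induct)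
  case empty then show ?case by simp
next
  case (insert l0 S)
  define c0 where "c0 = \<phi> l0"
  have fc0: "poly f c0 \<in> F" using insert.prems unfolding c0_def by simp
  show ?case
  proof (cases "S = {}")
    case True
    then have "degree f = 0" using insert.prems by simp
    then have "f = [:coeff f 0:]" by (rule degree_0_id[symmetric])
    then have "poly f c0 = coeff f 0" by (metis poly_pCons mult_zero_right poly_0 add.right_neutral)
    then show ?thesis using fc0 ideal_0[OF F] \<open>degree f = 0\<close>
      by (cases i) (auto simp: coeff_eq_0)
  next
    case False
    define h where "h = synthetic_div f c0"
    have fh: "[:-c0, 1:] * h + [:poly f c0:] = f" unfolding h_def by (rule synthetic_div_correct')
    have "card S \<ge> 1" using False insert.hyps(1) by (simp add: Suc_leI card_gt_0_iff)
    then have dh: "degree h < card S" using insert.prems(1) insert.hyps unfolding h_def degree_synthetic_div by simp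
    have hS: "\<forall>l\<in>S. poly h (\<phi> l) \<in> F"
    proof
      fix l assume l: "l \<in> S"
      then have lne: "l - l0 \<noteq> 0" using insert.hyps(2) by auto
      have "poly f (\<phi> l) = (\<phi> l - c0) * poly h (\<phi> l) + poly f c0"
        using arg_cong[OF fh[symmetric], of "\<lambda>p. poly p (\<phi> l)"] by (simp add: algebra_simps)
      moreover have "poly f (\<phi> l) \<in> F" using insert.prems l by simp
      ultimately have "(\<phi> l - c0) * poly h (\<phi> l) \<in> F" using ideal_diff[OF F _ fc0] by fastforce
      then have "\<phi> (l - l0) * poly h (\<phi> l) \<in> F" unfolding c0_def hom_diff[OF alg] .
      then have "\<phi> (inverse (l - l0)) * (\<phi> (l - l0) * poly h (\<phi> l)) \<in> F" by (rule ideal_lmult[OF F])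
      then show "poly h (\<phi> l) \<in> F" using hom_inv[OF alg lne] by (simp add: mult.assoc[symmetric])
    qed
    have hc: "coeff h j \<in> F" for j using insert.IH[OF dh hS] .
    have "coeff f i = - c0 * coeff h i + (case i of 0 \<Rightarrow> 0 | Suc j \<Rightarrow> coeff h j) + (if i = 0 then poly f c0 else 0)"
      using arg_cong[OF fh[symmetric], of "\<lambda>p. coeff p i"] by (simp add: coeff_pCons split: nat.split)
    moreover have "- c0 * coeff h i \<in> F" using hc ideal_lmult[OF F] by blast
    moreover have "(case i of 0 \<Rightarrow> 0 | Suc j \<Rightarrow> coeff h j) \<in> F" using hc ideal_0[OF F] by (cases i) auto
    moreover have "(if i = 0 then poly f c0 else 0) \<in> F" using fc0 ideal_0[OF F] by auto
    ultimately show ?thesis using ideal_add[OF F] by metis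
  qed
qed


lemma poly_Poly_in: "is_ideal Q \<Longrightarrow> set gs \<subseteq> Q \<Longrightarrow> poly (Poly gs) c \<in> Q"
proof (induction gs)
  case Nil then show ?case by (simp add: ideal_0)
next
  case (Cons g gs)
  then have "poly (Poly gs) c \<in> Q" "g \<in> Q" by auto
  then show ?case using ideal_add[OF Cons.prems(1) \<open>g \<in> Q\<close> ideal_lmult[OF Cons.prems(1) \<open>poly (Poly gs) c \<in> Q\<close>]] by simp
qed

lemma count_avoid:
  fixes \<phi> :: "'k::field \<Rightarrow> 'a::comm_ring_1" and Q :: "'a set"
  assumes N: "noetherian TYPE('a)" and unc: "uncountable (UNIV :: 'k set)" and alg: "is_ring_hom \<phi>"
    and Q: "is_ideal Q" and Fc: "countable Fam" and FF: "\<And>F. F \<in> Fam \<Longrightarrow> is_ideal F \<and> \<not> Q \<subseteq> F"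
  shows "\<exists>z\<in>Q. \<forall>F\<in>Fam. z \<notin> F"
proof -
  obtain G where G: "finite G" "Q = gen_ideal G" using N Q unfolding noetherian_def by blast
  obtain gs where gs: "set gs = G" using finite_list[OF G(1)] by blast
  have GQ: "G \<subseteq> Q" using gen_ideal_sup[OF G(1)] G(2) by blast
  define f where "f = Poly gs"
  have gsQ: "set gs \<subseteq> Q" using gs GQ by simp
  have zQ: "poly f (\<phi> l) \<in> Q" for l unfolding f_def by (rule poly_Poly_in[OF Q gsQ])
  have fin: "finite {l. poly f (\<phi> l) \<in> F}" if F: "F \<in> Fam" for F
  proof (rule ccontr)
    assume inf: "infinite {l. poly f (\<phi> l) \<in> F}"
    obtain S where S: "finite S" "card S = length gs + 1" "S \<subseteq> {l. poly f (\<phi> l) \<in> F}"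
      using infinite_arbitrarily_large[OF inf] by blast
    have Fid: "is_ideal F" using FF[OF F] by blast
    have deg: "degree f < card S" using S(2) degree_Poly[of gs] unfolding f_def by simp
    have Sa: "\<forall>l\<in>S. poly f (\<phi> l) \<in> F" using S(3) by blast
    have cf: "coeff f i \<in> F" for i by (rule interp[OF Fid alg S(1) deg Sa])
    have "G \<subseteq> F"
    proof
      fix g assume "g \<in> G"
      then obtain i where i: "i < length gs" "gs ! i = g" using gs by (auto simp: in_set_conv_nth)
      have "coeff f i = g" unfolding f_def using i by (simp add: nth_default_nth)
      then show "g \<in> F" using cf by metis
    qed
    then have "Q \<subseteq> F" using G(2) gen_ideal_sub[OF Fid] by metis
    then show False using FF[OF F] by blast
  qed
  have "countable (\<Union>F\<in>Fam. {l. poly f (\<phi> l) \<in> F})"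
  proof (rule countable_UN[OF Fc])
    fix F assume "F \<in> Fam"
    then show "countable {l. poly f (\<phi> l) \<in> F}" using fin by (simp add: countable_finite)
  qed
  then have "\<not> UNIV \<subseteq> (\<Union>F\<in>Fam. {l. poly f (\<phi> l) \<in> F})"
  proof (intro notI)
    assume "UNIV \<subseteq> (\<Union>F\<in>Fam. {l. poly f (\<phi> l) \<in> F})" "countable (\<Union>F\<in>Fam. {l. poly f (\<phi> l) \<in> F})"
    then have "countable (UNIV :: 'k set)" by (rule countable_subset)
    then show False using unc by simp
  qed
  then obtain l where "l \<notin> (\<Union>F\<in>Fam. {l. poly f (\<phi> l) \<in> F})" by blast
  then show ?thesis using zQ by blast
qed

lemma frac_A:
  fixes A :: "'a::idom set"
  assumes A_sub: "A \<subseteq> UNIV - {0}" and A_loc: "\<forall>q :: 'a fract. \<exists>r a. a \<in> A \<and> q = Fract r a"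
    and z: "z \<noteq> 0"
  shows "\<exists>a\<in>A. a \<in> prin z"
proof -
  obtain r a where ra: "a \<in> A" "Fract 1 z = Fract r a" using A_loc by blast
  have a0: "a \<noteq> 0" using ra(1) A_sub by blast
  have "1 * a = r * z" using ra(2) eq_fract(1)[OF z a0] by blast
  then have "a = z * r" by (simp add: mult.commute)
  then show ?thesis using ra(1) prin_mem[of z r] by auto
qed

lemma zero_prime: "is_prime_ideal {0::'a::idom}"
proof -
  have "(1::'a) \<notin> {0}" by simp
  then have "{0::'a} \<noteq> UNIV" by blast
  then show ?thesis unfolding is_prime_ideal_def is_ideal_def by auto
qed

lemma main2:
  fixes \<phi> :: "'k::field \<Rightarrow> 'a::idom" and A :: "'a set" and P Q :: "'a set"
  assumes noeth: "noetherian TYPE('a)"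
    and uncountable_field: "uncountable (UNIV :: 'k set)"
    and alg: "is_ring_hom \<phi>"
    and A_countable: "countable A"
    and A_sub: "A \<subseteq> UNIV - {0}"
    and A_loc: "\<forall>q :: 'a fract. \<exists>r a. a \<in> A \<and> q = Fract r a"
    and P: "is_prime_ideal P" and Q: "is_prime_ideal Q" and PQ: "P \<subseteq> Q" "P \<noteq> Q"
    and pP: "p \<in> P" and p0: "p \<noteq> 0"
  shows False
proof -
  define M where "M = (\<Union>a\<in>A. {P'. minprime (prin a) P'})"
  have Mc: "countable M" unfolding M_def
  proof (rule countable_UN[OF A_countable])
    fix a assume "a \<in> A"
    show "countable {P'. minprime (prin a) P'}"
      by (rule countable_finite[OF minprime_finite[OF noeth prin_ideal]])
  qed
  define Fam where "Fam = {P' \<in> M. P' \<subseteq> Q \<and> P' \<noteq> Q}"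
  have Famc: "countable Fam" unfolding Fam_def using Mc by (rule countable_subset[rotated]) blast
  have FF: "is_ideal F \<and> \<not> Q \<subseteq> F" if F: "F \<in> Fam" for F
  proof -
    obtain a where "a \<in> A" "minprime (prin a) F" using F unfolding Fam_def M_def by blast
    then have "is_ideal F" unfolding minprime_def using prime_ideal by blast
    moreover have "F \<subseteq> Q" "F \<noteq> Q" using F unfolding Fam_def by auto
    ultimately show ?thesis by blast
  qed
  have claim: "\<exists>F\<in>Fam. z \<in> F" if z: "z \<in> Q" "z \<noteq> 0" for z
  proof -
    have zQ: "prin z \<subseteq> Q" using prin_sub[OF prime_ideal[OF Q] z(1)] .
    obtain Qz where Qz: "minprime (prin z) Qz" "Qz \<subseteq> Q" using minprime_exists[OF noeth prin_ideal Q zQ] by blast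
    have QzQ: "Qz \<noteq> Q"
    proof
      assume "Qz = Q"
      then have "minprime (prin z) Q" using Qz(1) by simp
      then show False using pit[OF noeth _ P PQ pP p0] by blast
    qed
    have Qzp: "is_prime_ideal Qz" and zQz: "prin z \<subseteq> Qz" using Qz(1) unfolding minprime_def by auto
    obtain a where a: "a \<in> A" "a \<in> prin z" using frac_A[OF A_sub A_loc z(2)] by blast
    have a0: "a \<noteq> 0" using a(1) A_sub by blast
    have aQz: "prin a \<subseteq> Qz" using prin_sub[OF prime_ideal[OF Qzp]] a(2) zQz by blast
    obtain P' where P': "minprime (prin a) P'" "P' \<subseteq> Qz" using minprime_exists[OF noeth prin_ideal Qzp aQz] by blast
    have "P' = Qz"
    proof (rule ccontr)
      assume ne: "P' \<noteq> Qz"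
      have "is_prime_ideal P'" "a \<in> P'" using P'(1) prin_self unfolding minprime_def by auto
      then show False using pit[OF noeth Qz(1) _ P'(2) ne _ a0] by blast
    qed
    then have "Qz \<in> Fam" unfolding Fam_def M_def using P'(1) a(1) Qz(2) QzQ by blast
    moreover have "z \<in> Qz" using zQz prin_self by blast
    ultimately show ?thesis by blast
  qed
  obtain z where z: "z \<in> Q" "\<forall>F\<in>Fam. z \<notin> F"
    using count_avoid[OF noeth uncountable_field alg prime_ideal[OF Q] Famc FF] by blast
  show False
  proof (cases "z = 0")
    case False
    then show ?thesis using claim[OF z(1) False] z(2) by blast
  next
    case True
    have "p \<in> Q" using pP PQ(1) by blast
    then obtain F where "F \<in> Fam" using claim[OF _ p0] by blast
    moreover have "0 \<in> F" using FF[OF \<open>F \<in> Fam\<close>] ideal_0 by blast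
    ultimately show ?thesis using z(2) True by blast
  qed
qed


theorem lemma5p2:
  fixes \<phi> :: "'k::field \<Rightarrow> 'a::idom"
    and A :: "'a set"
  assumes noeth: "noetherian TYPE('a)"
    and uncountable_field: "uncountable (UNIV :: 'k set)"
    and alg: "is_ring_hom \<phi>"
    and not_field: "\<not> (\<forall>x::'a. x \<noteq> 0 \<longrightarrow> x dvd 1)"
    and A_countable: "countable A"
    and A_sub: "A \<subseteq> UNIV - {0}"
    and A_mult: "1 \<in> A" "\<forall>a\<in>A. \<forall>b\<in>A. a * b \<in> A"
    and A_loc: "\<forall>q :: 'a fract. \<exists>r a. a \<in> A \<and> q = Fract r a"
  shows "krull_dim TYPE('a) = 1 \<and> countable {P :: 'a set. is_prime_ideal P}"
proof -
  have M2: "False" if "is_prime_ideal P" "is_prime_ideal Q" "P \<subseteq> Q" "P \<noteq> Q" "p \<in> P" "p \<noteq> 0"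
    for P Q :: "'a set" and p
    using main2[OF noeth uncountable_field alg A_countable A_sub A_loc that] .
  obtain x :: 'a where x: "x \<noteq> 0" "\<not> x dvd 1" using not_field by blast
  obtain n Ps where Pl: "plist (prin x) n Ps" using plist_exists[OF noeth prin_ideal] by blast
  have "n \<noteq> 0"
  proof
    assume "n = 0"
    then have "(1::'a) \<in> prin x" using Pl unfolding plist_def by auto
    then obtain r where "1 = x * r" unfolding prin_def by blast
    then have "x dvd 1" by (metis dvdI)
    then show False using x(2) by blast
  qed
  then have Ps0: "is_prime_ideal (Ps 0)" "prin x \<subseteq> Ps 0" using Pl unfolding plist_def by auto
  have xPs: "x \<in> Ps 0" using Ps0(2) prin_self by blast
  let ?D = "{enat n | n. \<exists>P :: nat \<Rightarrow> 'a set. (\<forall>i\<le>n. is_prime_ideal (P i)) \<and> (\<forall>i<n. P i \<subset> P (Suc i))}"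
  have one: "enat 1 \<in> ?D"
  proof -
    define P where "P i = (if i = 0 then {0} else Ps 0)" for i :: nat
    have "\<forall>i\<le>1. is_prime_ideal (P i)" unfolding P_def using zero_prime Ps0(1) by auto
    moreover have "P 0 \<subset> P (Suc 0)"
    proof -
      have "0 \<in> Ps 0" using ideal_0[OF prime_ideal[OF Ps0(1)]] .
      then show ?thesis unfolding P_def using xPs x(1) by auto
    qed
    then have "\<forall>i<1. P i \<subset> P (Suc i)" by simp
    ultimately show ?thesis by blast
  qed
  have le: "d \<le> 1" if d: "d \<in> ?D" for d
  proof -
    obtain m where m1: "d = enat m" and
      ex: "\<exists>P :: nat \<Rightarrow> 'a set. (\<forall>i\<le>m. is_prime_ideal (P i)) \<and> (\<forall>i<m. P i \<subset> P (Suc i))"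
      using d by blast
    from ex obtain P :: "nat \<Rightarrow> 'a set" where m2': "\<forall>i\<le>m. is_prime_ideal (P i)" "\<forall>i<m. P i \<subset> P (Suc i)"
      by (elim exE conjE)
    have m: "d = enat m" "\<forall>i\<le>m. is_prime_ideal (P i)" "\<forall>i<m. P i \<subset> P (Suc i)" using m1 m2' by auto
    have "m \<le> 1"
    proof (rule ccontr)
      assume "\<not> m \<le> 1"
      then have m2: "0 < m" "1 < m" by auto
      have c0: "P 0 \<subset> P 1" using m(3)[rule_format, of 0] m2(1) by simp
      have c1: "P 1 \<subset> P 2" using m(3)[rule_format, of 1] m2(2) by (simp add: numeral_2_eq_2)
      have pr: "is_prime_ideal (P 0)" "is_prime_ideal (P 1)" "is_prime_ideal (P 2)"
        using m(2) m2 by auto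
      obtain p where p: "p \<in> P 1" "p \<notin> P 0" using c0 by blast
      have "0 \<in> P 0" using ideal_0[OF prime_ideal[OF pr(1)]] .
      then have "p \<noteq> 0" using p(2) by blast
      then show False using M2[OF pr(2) pr(3) _ _ p(1)] c1 by blast
    qed
    then show ?thesis using m(1) by (simp add: one_enat_def)
  qed
  have "Sup ?D = 1"
  proof (rule antisym)
    show "Sup ?D \<le> 1" using le by (rule Sup_least)
    show "1 \<le> Sup ?D" using Sup_upper[OF one] by (simp add: one_enat_def)
  qed
  then have kd: "krull_dim TYPE('a) = 1" unfolding krull_dim_def .
  define M where "M = (\<Union>a\<in>A. {P'. minprime (prin a) P'})"
  have Mc: "countable M" unfolding M_def
  proof (rule countable_UN[OF A_countable])
    fix a assume "a \<in> A"
    show "countable {P'. minprime (prin a) P'}"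
      by (rule countable_finite[OF minprime_finite[OF noeth prin_ideal]])
  qed
  have "{P :: 'a set. is_prime_ideal P} \<subseteq> insert {0} M"
  proof
    fix P :: "'a set" assume "P \<in> {P. is_prime_ideal P}"
    then have P: "is_prime_ideal P" by simp
    show "P \<in> insert {0} M"
    proof (cases "P = {0}")
      case True then show ?thesis by simp
    next
      case False
      have "0 \<in> P" using ideal_0[OF prime_ideal[OF P]] .
      then obtain p where p: "p \<in> P" "p \<noteq> 0" using False by blast
      obtain a where a: "a \<in> A" "a \<in> prin p" using frac_A[OF A_sub A_loc p(2)] by blast
      have a0: "a \<noteq> 0" using a(1) A_sub by blast
      have aP: "prin a \<subseteq> P" using prin_sub[OF prime_ideal[OF P]] a(2) prin_sub[OF prime_ideal[OF P] p(1)] by blast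
      obtain P' where P': "minprime (prin a) P'" "P' \<subseteq> P" using minprime_exists[OF noeth prin_ideal P aP] by blast
      have "P' = P"
      proof (rule ccontr)
        assume ne: "P' \<noteq> P"
        have "is_prime_ideal P'" "a \<in> P'" using P'(1) prin_self unfolding minprime_def by auto
        then show False using M2[OF _ P P'(2) ne _ a0] by blast
      qed
      then have "P \<in> M" unfolding M_def using P'(1) a(1) by blast
      then show ?thesis by simp
    qed
  qed
  moreover have "countable (insert {0} M)" using Mc by simp
  ultimately have "countable {P :: 'a set. is_prime_ideal P}" by (rule countable_subset)
  with kd show ?thesis by blast
qed

end
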